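(* Let $\kappa>0$ be an ordinal. For each $\alpha<\kappa$, let $L_\alpha$ be a set equipped with two partial orders $\le$ and $\preceq$, each of which makes $L_\alpha$ a complete lattice. Let $L=\prod_{\alpha<\kappa}L_\alpha$ with the pointwise order $x\le y$ iff $x(\alpha)\le y(\alpha)$ for all $\alpha<\kappa$. For $\alpha<\kappa$ define $x\sqsubseteq_\alpha y$ iff $x(\beta)=y(\beta)$ for all $\beta<\alpha$ and $x(\alpha)\preceq y(\alpha)$. Then $(L,\le,(\sqsubseteq_\alpha)_{\alpha<\kappa})$ satisfies Axiom 3 if and only if for every $\alpha<\kappa$ and all $a,b\in L_\alpha$, $a\preceq b$ implies $a\le b$. (In that case the structure is a model of Axioms 1–4, since Axioms 1, 2 and 4 always hold for this construction.)
   Context: Conventions. $x=_\alpha y$ means $x\sqsubseteq_\alpha y$ and $y\sqsubseteq_\alpha x$. For $x\in L$, $(x]_\alpha=\{y\in L:\forall\beta<\alpha,\ x=_\beta y\}$. For a set $X$, $X\sqsubseteq_\alpha y$ means $x\sqsubseteq_\alpha y$ for all $x\in X$. Axiom 3: for every $x\in L$, every $\alpha<\kappa$ and every $X\subseteq(x]_\alpha$ there is $y\in(x]_\alpha$ with $X\sqsubseteq_\alpha y$ such that for all $z\in(x]_\alpha$ with $X\sqsubseteq_\alpha z$ we have $y\sqsubseteq_\alpha z$ and $y\le z$. The other axioms: - (A1) for all $\alpha<\beta<\kappa$, $x\sqsubseteq_\beta y$ implies $x=_\alpha y$; - (A2) $\bigcap_{\alpha<\kappa}=_\alpha$ is the identity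 relation on $L$; - (A4) for every nonempty $X\subseteq L$, every $\alpha<\kappa$ and every $y\in L$, if $y=_\alpha x$ for all $x\in X$ then $y=_\alpha\bigvee X$, where $\bigvee$ is the join for $\le$. *)

theory Defs
  imports Main
begin

definition partial_order_on_set :: "'a set \<Rightarrow> ('a \<Rightarrow> 'a \<Rightarrow> bool) \<Rightarrow> bool" where
  "partial_order_on_set A r \<longleftrightarrow>
     (\<forall>a\<in>A. r a a) \<and>
     (\<forall>a\<in>A. \<forall>b\<in>A. r a b \<and> r b a \<longrightarrow> a = b) \<and>
     (\<forall>a\<in>A. \<forall>b\<in>A. \<forall>c\<in>A. r a b \<and> r b c \<longrightarrow> r a c)"

definition complete_lattice_on_set :: "'a set \<Rightarrow> ('a \<Rightarrow> 'a \<Rightarrow> bool) \<Rightarrow> bool" where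
  "complete_lattice_on_set A r \<longleftrightarrow> partial_order_on_set A r \<and>
     (\<forall>X\<subseteq>A. \<exists>s\<in>A. (\<forall>x\<in>X. r x s) \<and> (\<forall>t\<in>A. (\<forall>x\<in>X. r x t) \<longrightarrow> r s t))"

text \<open>Generic structure (L, le, (sq alpha)_{alpha < kappa}); the ordinal kappa is the order type
  of the well-ordered index type 'i (every index alpha :: 'i is < kappa).\<close>
definition eq_at :: "('i \<Rightarrow> 'x \<Rightarrow> 'x \<Rightarrow> bool) \<Rightarrow> 'i \<Rightarrow> 'x \<Rightarrow> 'x \<Rightarrow> bool" where
  "eq_at sq \<alpha> x y \<longleftrightarrow> sq \<alpha> x y \<and> sq \<alpha> y x"

definition down_at :: "'x set \<Rightarrow> ('i::order \<Rightarrow> 'x \<Rightarrow> 'x \<Rightarrow> bool) \<Rightarrow> 'x \<Rightarrow> 'i \<Rightarrow> 'x set" where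
  "down_at L sq x \<alpha> = {y \<in> L. \<forall>\<beta><\<alpha>. eq_at sq \<beta> x y}"

definition axiom3 :: "'x set \<Rightarrow> ('x \<Rightarrow> 'x \<Rightarrow> bool) \<Rightarrow> ('i::order \<Rightarrow> 'x \<Rightarrow> 'x \<Rightarrow> bool) \<Rightarrow> bool" where
  "axiom3 L le sq \<longleftrightarrow>
     (\<forall>x\<in>L. \<forall>\<alpha>. \<forall>X. X \<subseteq> down_at L sq x \<alpha> \<longrightarrow>
        (\<exists>y\<in>down_at L sq x \<alpha>. (\<forall>u\<in>X. sq \<alpha> u y) \<and>
           (\<forall>z\<in>down_at L sq x \<alpha>. (\<forall>u\<in>X. sq \<alpha> u z) \<longrightarrow> sq \<alpha> y z \<and> le y z)))"

definition prodL :: "('i \<Rightarrow> 'a set) \<Rightarrow> ('i \<Rightarrow> 'a) set" where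
  "prodL A = {x. \<forall>\<alpha>. x \<alpha> \<in> A \<alpha>}"

definition prod_le :: "('i \<Rightarrow> 'a \<Rightarrow> 'a \<Rightarrow> bool) \<Rightarrow> ('i \<Rightarrow> 'a) \<Rightarrow> ('i \<Rightarrow> 'a) \<Rightarrow> bool" where
  "prod_le le x y \<longleftrightarrow> (\<forall>\<alpha>. le \<alpha> (x \<alpha>) (y \<alpha>))"

definition prod_sq :: "('i::order \<Rightarrow> 'a \<Rightarrow> 'a \<Rightarrow> bool) \<Rightarrow> 'i \<Rightarrow> ('i \<Rightarrow> 'a) \<Rightarrow> ('i \<Rightarrow> 'a) \<Rightarrow> bool" where
  "prod_sq pre \<alpha> x y \<longleftrightarrow> (\<forall>\<beta><\<alpha>. x \<beta> = y \<beta>) \<and> pre \<alpha> (x \<alpha>) (y \<alpha>)"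

end

theory Submission
  imports Defs
begin

lemma down_char:
  fixes A :: "'i::wellorder \<Rightarrow> 'a set"
  assumes po: "\<And>\<alpha>. partial_order_on_set (A \<alpha>) (pre \<alpha>)"
    and x: "x \<in> prodL A"
  shows "y \<in> down_at (prodL A) (prod_sq pre) x \<alpha> \<longleftrightarrow> y \<in> prodL A \<and> (\<forall>\<beta><\<alpha>. y \<beta> = x \<beta>)"
proof
  assume h: "y \<in> down_at (prodL A) (prod_sq pre) x \<alpha>"
  hence yL: "y \<in> prodL A" by (simp add: down_at_def)
  have "y \<beta> = x \<beta>" if "\<beta> < \<alpha>" for \<beta>
  proof -
    have "pre \<beta> (x \<beta>) (y \<beta>)" "pre \<beta> (y \<beta>) (x \<beta>)"
      using h that by (auto simp: down_at_def eq_at_def prod_sq_def)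
    moreover have "x \<beta> \<in> A \<beta>" "y \<beta> \<in> A \<beta>" using x yL by (auto simp: prodL_def)
    ultimately show ?thesis using po[of \<beta>] unfolding partial_order_on_set_def by blast
  qed
  thus "y \<in> prodL A \<and> (\<forall>\<beta><\<alpha>. y \<beta> = x \<beta>)" using yL by blast
next
  assume h: "y \<in> prodL A \<and> (\<forall>\<beta><\<alpha>. y \<beta> = x \<beta>)"
  have "eq_at (prod_sq pre) \<beta> x y" if "\<beta> < \<alpha>" for \<beta>
  proof -
    have "x \<beta> \<in> A \<beta>" using x by (auto simp: prodL_def)
    hence "pre \<beta> (x \<beta>) (x \<beta>)" using po[of \<beta>] unfolding partial_order_on_set_def by blast
    thus ?thesis using h that unfolding eq_at_def prod_sq_def
      by (metis order.strict_trans)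
  qed
  thus "y \<in> down_at (prodL A) (prod_sq pre) x \<alpha>" using h by (simp add: down_at_def)
qed

theorem mainTheorem14:
  fixes A :: "'i::wellorder \<Rightarrow> 'a set"
    and le pre :: "'i \<Rightarrow> 'a \<Rightarrow> 'a \<Rightarrow> bool"
  assumes "\<And>\<alpha>. complete_lattice_on_set (A \<alpha>) (le \<alpha>)"
    and "\<And>\<alpha>. complete_lattice_on_set (A \<alpha>) (pre \<alpha>)"
  shows "axiom3 (prodL A) (prod_le le) (prod_sq pre) \<longleftrightarrow>
         (\<forall>\<alpha>. \<forall>a\<in>A \<alpha>. \<forall>b\<in>A \<alpha>. pre \<alpha> a b \<longrightarrow> le \<alpha> a b)"
proof -
  have poP: "\<And>\<alpha>. partial_order_on_set (A \<alpha>) (pre \<alpha>)"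
    using assms(2) by (simp add: complete_lattice_on_set_def)
  have poL: "\<And>\<alpha>. partial_order_on_set (A \<alpha>) (le \<alpha>)"
    using assms(1) by (simp add: complete_lattice_on_set_def)
  define bot where "bot = (\<lambda>\<gamma>. SOME s. s \<in> A \<gamma> \<and> (\<forall>t\<in>A \<gamma>. le \<gamma> s t))"
  have bot: "bot \<gamma> \<in> A \<gamma> \<and> (\<forall>t\<in>A \<gamma>. le \<gamma> (bot \<gamma>) t)" for \<gamma>
  proof -
    obtain s where "s \<in> A \<gamma> \<and> (\<forall>t\<in>A \<gamma>. le \<gamma> s t)"
      using assms(1)[of \<gamma>] unfolding complete_lattice_on_set_def by (metis empty_iff empty_subsetI)
    thus ?thesis unfolding bot_def by (rule someI)
  qed
  have botL: "bot \<in> prodL A" using bot by (simp add: prodL_def)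
  show ?thesis
  proof
    assume ax: "axiom3 (prodL A) (prod_le le) (prod_sq pre)"
    show "\<forall>\<alpha>. \<forall>a\<in>A \<alpha>. \<forall>b\<in>A \<alpha>. pre \<alpha> a b \<longrightarrow> le \<alpha> a b"
    proof (intro allI ballI impI)
      fix \<alpha> a b assume a: "a \<in> A \<alpha>" and b: "b \<in> A \<alpha>" and ab: "pre \<alpha> a b"
      define x where "x = bot(\<alpha> := a)"
      have xL: "x \<in> prodL A" using bot a by (simp add: prodL_def x_def)
      have xd: "x \<in> down_at (prodL A) (prod_sq pre) x \<alpha>"
        using down_char[OF poP xL] xL by blast
      obtain y where yd: "y \<in> down_at (prodL A) (prod_sq pre) x \<alpha>"
        and yX: "prod_sq pre \<alpha> x y"
        and yz: "\<And>z. z \<in> down_at (prodL A) (prod_sq pre) x \<alpha> \<Longrightarrow> prod_sq pre \<alpha> x z \<Longrightarrow>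
                  prod_sq pre \<alpha> y z \<and> prod_le le y z"
        using ax xL xd unfolding axiom3_def
        by (metis empty_subsetI insert_subset singletonD singletonI)
      have yL: "y \<in> prodL A" using yd by (simp add: down_at_def)
      have paa: "pre \<alpha> a a" using poP[of \<alpha>] a unfolding partial_order_on_set_def by blast
      have "prod_sq pre \<alpha> x x" using paa by (simp add: prod_sq_def x_def)
      hence "prod_sq pre \<alpha> y x" using yz xd by blast
      hence "pre \<alpha> (y \<alpha>) a" by (simp add: prod_sq_def x_def)
      moreover have "pre \<alpha> a (y \<alpha>)" using yX by (simp add: prod_sq_def x_def)
      moreover have "y \<alpha> \<in> A \<alpha>" using yL by (simp add: prodL_def)
      ultimately have ya: "y \<alpha> = a" using poP[of \<alpha>] a unfolding partial_order_on_set_def by blast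
      define z where "z = x(\<alpha> := b)"
      have zL: "z \<in> prodL A" using xL b by (simp add: prodL_def z_def)
      have zd: "z \<in> down_at (prodL A) (prod_sq pre) x \<alpha>"
        using down_char[OF poP xL] zL by (simp add: z_def)
      have "prod_sq pre \<alpha> x z" using ab by (simp add: prod_sq_def x_def z_def)
      hence "prod_le le y z" using yz zd by blast
      thus "le \<alpha> a b" using ya unfolding prod_le_def z_def by (metis fun_upd_same)
    qed
  next
    assume imp: "\<forall>\<alpha>. \<forall>a\<in>A \<alpha>. \<forall>b\<in>A \<alpha>. pre \<alpha> a b \<longrightarrow> le \<alpha> a b"
    show "axiom3 (prodL A) (prod_le le) (prod_sq pre)"
      unfolding axiom3_def
    proof (intro ballI allI impI)
      fix x \<alpha> X
      assume xL: "x \<in> prodL A" and XD: "X \<subseteq> down_at (prodL A) (prod_sq pre) x \<alpha>"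
      note dc = down_char[OF poP xL]
      define S where "S = (\<lambda>u. u \<alpha>) ` X"
      have SA: "S \<subseteq> A \<alpha>" using XD dc by (auto simp: S_def prodL_def)
      obtain s where s: "s \<in> A \<alpha>" "\<forall>v\<in>S. pre \<alpha> v s"
        "\<forall>t\<in>A \<alpha>. (\<forall>v\<in>S. pre \<alpha> v t) \<longrightarrow> pre \<alpha> s t"
        using assms(2)[of \<alpha>] SA unfolding complete_lattice_on_set_def by blast
      define y where "y = (\<lambda>\<gamma>. if \<gamma> < \<alpha> then x \<gamma> else if \<gamma> = \<alpha> then s else bot \<gamma>)"
      have yL: "y \<in> prodL A" using xL s bot by (auto simp: prodL_def y_def)
      have yd: "y \<in> down_at (prodL A) (prod_sq pre) x \<alpha>" using dc yL by (simp add: y_def)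
      show "\<exists>y\<in>down_at (prodL A) (prod_sq pre) x \<alpha>. (\<forall>u\<in>X. prod_sq pre \<alpha> u y) \<and>
           (\<forall>z\<in>down_at (prodL A) (prod_sq pre) x \<alpha>. (\<forall>u\<in>X. prod_sq pre \<alpha> u z) \<longrightarrow>
              prod_sq pre \<alpha> y z \<and> prod_le le y z)"
      proof (intro bexI[OF _ yd] conjI ballI impI)
        fix u assume "u \<in> X"
        hence "\<forall>\<beta><\<alpha>. u \<beta> = x \<beta>" "pre \<alpha> (u \<alpha>) s" using XD dc s(2) S_def by auto
        thus "prod_sq pre \<alpha> u y" by (simp add: prod_sq_def y_def)
      next
        fix z assume zd: "z \<in> down_at (prodL A) (prod_sq pre) x \<alpha>"
          and uz: "\<forall>u\<in>X. prod_sq pre \<alpha> u z"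
        have zL: "z \<in> prodL A" and zx: "\<forall>\<beta><\<alpha>. z \<beta> = x \<beta>" using zd dc by auto
        have za: "z \<alpha> \<in> A \<alpha>" using zL by (simp add: prodL_def)
        have "\<forall>v\<in>S. pre \<alpha> v (z \<alpha>)" using uz by (auto simp: S_def prod_sq_def)
        hence sz: "pre \<alpha> s (z \<alpha>)" using s(3) za by blast
        show "prod_sq pre \<alpha> y z" using sz zx by (simp add: prod_sq_def y_def)
        show "prod_le le y z" unfolding prod_le_def
        proof
          fix \<gamma>
          have zg: "z \<gamma> \<in> A \<gamma>" using zL by (simp add: prodL_def)
          show "le \<gamma> (y \<gamma>) (z \<gamma>)"
          proof (cases "\<gamma> < \<alpha>")
            case True
            thus ?thesis using zx zg poL[of \<gamma>] unfolding partial_order_on_set_def y_def by auto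
          next
            case False
            show ?thesis
            proof (cases "\<gamma> = \<alpha>")
              case True
              thus ?thesis using imp s(1) za sz by (simp add: y_def)
            next
              case False2: False
              thus ?thesis using False bot zg by (simp add: y_def)
            qed
          qed
        qed
      qed
    qed
  qed
qed

end
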